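(* The Hilbert spaces $H_N^{\mathrm{sip}}=L^2(\frac1N\mathbb Z,\nu_{\gamma,N})$ converge to $H^{\mathrm{sbm}}=L^2(\mathbb R,\bar\nu)$ in the following sense: with the dense subset $C=\{f+\lambda\mathbf 1_{\{0\}}:f\in C_c^\infty(\mathbb R),\lambda\in\mathbb R\}\subset H^{\mathrm{sbm}}$ and the linear maps $\Phi_N:C\to H_N^{\mathrm{sip}}$, $\Phi_Nf=f|_{\frac1N\mathbb Z}$, one has $\lim_{N\to\infty}\|\Phi_Nf\|_{H_N^{\mathrm{sip}}}=\|f\|_{H^{\mathrm{sbm}}}$ for all $f\in C$.
   Context: $\gamma>0$; $\mu_N$ gives mass $\frac1N$ to each point of $\frac1N\mathbb Z$; $\nu_{\gamma,N}=\mu_N+\sqrt2\gamma\delta_0$; $\bar\nu=dx+\sqrt2\gamma\delta_0$ on $\mathbb R$. *)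

theory Defs
  imports "HOL-Analysis.Analysis"
begin

definition smooth_real :: "(real \<Rightarrow> real) \<Rightarrow> bool" where
  "smooth_real g \<longleftrightarrow> (\<forall>n x. ((deriv ^^ n) g) differentiable (at x))"

definition Cc_infty :: "(real \<Rightarrow> real) set" where
  "Cc_infty = {g. smooth_real g \<and> compact (closure {x. g x \<noteq> 0})}"

definition C_sbm :: "(real \<Rightarrow> real) set" where
  "C_sbm = {h. \<exists>g\<in>Cc_infty. \<exists>c::real. h = (\<lambda>x. g x + (if x = 0 then c else 0))}"

text \<open>Squared norm in H^sbm = L^2(R, dx + sqrt 2 gamma delta_0).\<close>
definition normsq_sbm :: "real \<Rightarrow> (real \<Rightarrow> real) \<Rightarrow> real" where
  "normsq_sbm \<gamma> f = (\<integral>x. (f x)^2 \<partial>lborel) + sqrt 2 * \<gamma> * (f 0)^2"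

text \<open>Squared norm in H_N^sip = L^2(Z/N, mu_N + sqrt 2 gamma delta_0),
  applied to the restriction of f to the lattice (1/N)Z.\<close>
definition normsq_sip :: "real \<Rightarrow> nat \<Rightarrow> (real \<Rightarrow> real) \<Rightarrow> real" where
  "normsq_sip \<gamma> N f = (\<Sum>\<^sub>\<infinity>k::int. (1 / real N) * (f (real_of_int k / real N))^2)
                        + sqrt 2 * \<gamma> * (f 0)^2"

end

theory Submission
  imports Defs "HOL-Computational_Algebra.Polynomial"
begin

lemma funpow_deriv_Suc: "(deriv ^^ Suc n) f = (deriv ^^ n) (deriv f)"
  by (simp only: funpow_Suc_right comp_def)

definition Dn :: "nat \<Rightarrow> (real \<Rightarrow> real) \<Rightarrow> bool" where
  "Dn n f \<longleftrightarrow> (\<forall>k\<le>n. \<forall>x. (deriv ^^ k) f differentiable (at x))"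

lemma smooth_real_Dn: "smooth_real f \<longleftrightarrow> (\<forall>n. Dn n f)"
  unfolding smooth_real_def Dn_def by auto

lemma Dn_0: "Dn 0 f \<longleftrightarrow> (\<forall>x. f differentiable (at x))"
  unfolding Dn_def by auto

lemma Dn_Suc: "Dn (Suc n) f \<longleftrightarrow> (\<forall>x. f differentiable (at x)) \<and> Dn n (deriv f)"
proof
  assume a: "Dn (Suc n) f"
  then show "(\<forall>x. f differentiable (at x)) \<and> Dn n (deriv f)"
    unfolding Dn_def by (metis Suc_le_mono funpow_0 funpow_deriv_Suc id_apply le0)
next
  assume a: "(\<forall>x. f differentiable (at x)) \<and> Dn n (deriv f)"
  show "Dn (Suc n) f" unfolding Dn_def
  proof (intro allI impI)
    fix k x assume "k \<le> Suc n"
    show "(deriv ^^ k) f differentiable (at x)"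
    proof (cases k)
      case 0 then show ?thesis using a by simp
    next
      case (Suc m) then show ?thesis using a \<open>k \<le> Suc n\<close> unfolding Dn_def
        by (simp only: funpow_deriv_Suc)
    qed
  qed
qed

lemma deriv_add_fun:
  fixes a b :: "real \<Rightarrow> real"
  assumes "\<And>x. a differentiable (at x)" "\<And>x. b differentiable (at x)"
  shows "deriv (\<lambda>x. a x + b x) = (\<lambda>x. deriv a x + deriv b x)"
proof
  fix x
  show "deriv (\<lambda>x. a x + b x) x = deriv a x + deriv b x"
    by (rule DERIV_imp_deriv, intro derivative_intros)
       (use assms DERIV_deriv_iff_real_differentiable in auto)
qed

lemma deriv_scale_fun:
  fixes a :: "real \<Rightarrow> real"
  assumes "\<And>x. a differentiable (at x)"
  shows "deriv (\<lambda>x. c * a x) = (\<lambda>x. c * deriv a x)"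
proof
  fix x
  have "(a has_real_derivative deriv a x) (at x)"
    using assms DERIV_deriv_iff_real_differentiable by auto
  from DERIV_cmult[OF this, of c] show "deriv (\<lambda>x. c * a x) x = c * deriv a x"
    by (intro DERIV_imp_deriv) simp
qed

lemma deriv_mult_fun:
  fixes a b :: "real \<Rightarrow> real"
  assumes "\<And>x. a differentiable (at x)" "\<And>x. b differentiable (at x)"
  shows "deriv (\<lambda>x. a x * b x) = (\<lambda>x. deriv a x * b x + a x * deriv b x)"
proof
  fix x
  have "(a has_real_derivative deriv a x) (at x)" "(b has_real_derivative deriv b x) (at x)"
    using assms DERIV_deriv_iff_real_differentiable by auto
  from DERIV_mult[OF this] show "deriv (\<lambda>x. a x * b x) x = deriv a x * b x + a x * deriv b x"
    by (intro DERIV_imp_deriv) (simp add: algebra_simps)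
qed

lemma deriv_affine_fun:
  fixes a :: "real \<Rightarrow> real"
  assumes "\<And>x. a differentiable (at x)"
  shows "deriv (\<lambda>x. a (c * x + d)) = (\<lambda>x. c * deriv a (c * x + d))"
proof
  fix x
  have 1: "(a has_real_derivative deriv a (c*x+d)) (at (c*x+d))"
    using assms DERIV_deriv_iff_real_differentiable by auto
  have 2: "((\<lambda>x. c * x + d) has_real_derivative c) (at x)"
    by (auto intro!: derivative_eq_intros)
  from DERIV_chain2[OF 1 2] show "deriv (\<lambda>x. a (c * x + d)) x = c * deriv a (c * x + d)"
    by (intro DERIV_imp_deriv) (simp add: algebra_simps)
qed

lemma diff_affine:
  fixes a :: "real \<Rightarrow> real"
  assumes "\<And>x. a differentiable (at x)"
  shows "(\<lambda>x. a (c * x + d)) differentiable (at x)"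
proof -
  have 1: "(a has_real_derivative deriv a (c*x+d)) (at (c*x+d))"
    using assms DERIV_deriv_iff_real_differentiable by auto
  have 2: "((\<lambda>x. c * x + d) has_real_derivative c) (at x)"
    by (auto intro!: derivative_eq_intros)
  from DERIV_chain2[OF 1 2] show ?thesis using real_differentiable_def by blast
qed

lemma Dn_add: "Dn n a \<Longrightarrow> Dn n b \<Longrightarrow> Dn n (\<lambda>x. a x + b x)"
proof (induction n arbitrary: a b)
  case 0 then show ?case by (auto simp: Dn_0 intro: differentiable_add)
next
  case (Suc n)
  then show ?case by (auto simp: Dn_Suc deriv_add_fun intro: differentiable_add)
qed

lemma Dn_scale: "Dn n a \<Longrightarrow> Dn n (\<lambda>x. c * a x)"
proof (induction n arbitrary: a)
  case 0 then show ?case by (auto simp: Dn_0 intro: differentiable_mult)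
next
  case (Suc n)
  then show ?case by (auto simp: Dn_Suc deriv_scale_fun intro: differentiable_mult)
qed

lemma Dn_affine: "Dn n a \<Longrightarrow> Dn n (\<lambda>x. a (c * x + d))"
proof (induction n arbitrary: a)
  case 0 then show ?case by (auto simp: Dn_0 intro: diff_affine)
next
  case (Suc n)
  then have "Dn n (\<lambda>x. deriv a (c * x + d))" by (simp add: Dn_Suc)
  then show ?case using Suc.prems
    by (auto simp: Dn_Suc deriv_affine_fun intro: diff_affine Dn_scale)
qed

lemma Dn_mult: "(\<forall>m. Dn m a) \<Longrightarrow> (\<forall>m. Dn m b) \<Longrightarrow> Dn n (\<lambda>x. a x * b x)"
proof (induction n arbitrary: a b)
  case 0
  then have "\<And>x. a differentiable (at x)" "\<And>x. b differentiable (at x)"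
    using Dn_0 by blast+
  then show ?case by (auto simp: Dn_0 intro!: differentiable_mult)
next
  case (Suc n)
  have da: "\<forall>m. Dn m (deriv a)" and db: "\<forall>m. Dn m (deriv b)"
    using Suc.prems by (metis Dn_Suc)+
  have a1: "\<And>x. a differentiable (at x)" and b1: "\<And>x. b differentiable (at x)"
    using Suc.prems Dn_0 by blast+
  have "Dn n (\<lambda>x. deriv a x * b x + a x * deriv b x)"
    by (rule Dn_add; rule Suc.IH) (use da db Suc.prems in auto)
  then show ?case using a1 b1
    by (auto simp: Dn_Suc deriv_mult_fun intro: differentiable_mult)
qed

lemma Dn_const0: "Dn n (\<lambda>x. 0)"
proof (induction n)
  case 0 then show ?case by (simp add: Dn_0)
next
  case (Suc n)
  have "deriv (\<lambda>x::real. 0::real) = (\<lambda>x. 0)" by (rule ext, rule DERIV_imp_deriv) auto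
  then show ?case using Suc by (simp add: Dn_Suc)
qed

definition Ep :: "real poly \<Rightarrow> real \<Rightarrow> real" where
  "Ep p x = (if x > 0 then poly p (1/x) * exp (-(1/x)) else 0)"

definition qstep :: "real poly \<Rightarrow> real poly" where
  "qstep p = [:0,0,1:] * (p - pderiv p)"

lemma poly_exp_lim: fixes r :: "real poly" shows "((\<lambda>t. poly r t * exp (-t)) \<longlongrightarrow> 0) at_top"
proof -
  have eq: "(\<lambda>t. poly r t * exp (-t)) = (\<lambda>t. \<Sum>i\<le>degree r. coeff r i * (t^i / exp t))"
    by (auto simp: poly_altdef sum_divide_distrib exp_minus field_simps)
  have "((\<lambda>t. \<Sum>i\<le>degree r. coeff r i * (t^i / exp t)) \<longlongrightarrow> 0) at_top"
    by (rule tendsto_null_sum, rule tendsto_mult_right_zero, rule tendsto_power_div_exp_0)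
  then show ?thesis by (simp add: eq)
qed

lemma poly_exp_lim0: fixes r :: "real poly" shows "((\<lambda>y. poly r (1/y) * exp (-(1/y))) \<longlongrightarrow> 0) (at_right 0)"
proof -
  have "((\<lambda>y. poly r (inverse y) * exp (-(inverse y))) \<longlongrightarrow> 0) (at_right 0)"
    using filterlim_compose[OF poly_exp_lim filterlim_inverse_at_top_right] by (simp add: o_def)
  then show ?thesis by (simp add: inverse_eq_divide)
qed

lemma Ep_deriv: "(Ep p has_real_derivative Ep (qstep p) x) (at x)"
proof (cases "x > 0")
  case True
  have "((\<lambda>y. poly p (1/y) * exp (-(1/y))) has_real_derivative
      poly (pderiv p) (1/x) * (- 1 / x^2) * exp (-(1/x)) + poly p (1/x) * (exp (-(1/x)) * (1/x^2))) (at x)"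
    using True
    by (auto intro!: derivative_eq_intros DERIV_chain2[OF poly_DERIV] simp: power2_eq_square field_simps)
  moreover have "poly (pderiv p) (1/x) * (- 1 / x^2) * exp (-(1/x)) + poly p (1/x) * (exp (-(1/x)) * (1/x^2))
      = Ep (qstep p) x"
    using True by (simp add: Ep_def qstep_def algebra_simps power2_eq_square)
  ultimately have "((\<lambda>y. poly p (1/y) * exp (-(1/y))) has_real_derivative Ep (qstep p) x) (at x)"
    by simp
  then show ?thesis
    by (rule has_field_derivative_transform_within_open[where S="{0<..}"]) (use True in \<open>auto simp: Ep_def\<close>)
next
  case False
  show ?thesis
  proof (cases "x < 0")
    case True
    have "((\<lambda>y. 0) has_real_derivative Ep (qstep p) x) (at x)"
      using True by (simp add: Ep_def)
    then show ?thesis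
      by (rule has_field_derivative_transform_within_open[where S="{..<0}"]) (use True in \<open>auto simp: Ep_def\<close>)
  next
    case False
    with \<open>\<not> x > 0\<close> have x0: "x = 0" by simp
    have L: "((\<lambda>y. (Ep p y - Ep p 0) / (y - 0)) \<longlongrightarrow> 0) (at_left 0)"
    proof (rule Lim_transform_eventually[OF tendsto_const])
      show "\<forall>\<^sub>F y in at_left 0. 0 = (Ep p y - Ep p 0) / (y - 0)"
        unfolding eventually_at_left_field by (auto simp: Ep_def intro!: exI[of _ "-1"])
    qed
    have R: "((\<lambda>y. (Ep p y - Ep p 0) / (y - 0)) \<longlongrightarrow> 0) (at_right 0)"
    proof (rule Lim_transform_eventually[OF poly_exp_lim0[of "[:0,1:] * p"]])
      show "\<forall>\<^sub>F y in at_right 0. poly ([:0,1:] * p) (1/y) * exp (-(1/y)) = (Ep p y - Ep p 0) / (y - 0)"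
        unfolding eventually_at_right_field by (auto simp: Ep_def intro!: exI[of _ "1"])
    qed
    have "((\<lambda>y. (Ep p y - Ep p 0) / (y - 0)) \<longlongrightarrow> 0) (at 0)"
      using L R filterlim_at_split by blast
    then show ?thesis using x0 by (simp add: has_field_derivative_iff Ep_def)
  qed
qed

lemma Ep_Dn: "Dn n (Ep p)"
proof (induction n arbitrary: p)
  case 0 then show ?case using Ep_deriv by (auto simp: Dn_0 real_differentiable_def)
next
  case (Suc n)
  have "deriv (Ep p) = Ep (qstep p)" by (rule ext, rule DERIV_imp_deriv, rule Ep_deriv)
  then show ?case using Suc Ep_deriv by (auto simp: Dn_Suc real_differentiable_def)
qed

definition bump :: "real \<Rightarrow> real \<Rightarrow> real \<Rightarrow> real \<Rightarrow> real" where
  "bump a b s x = Ep 1 (s * x + (- s * a)) * Ep 1 ((- s) * x + s * b)"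

lemma bump_smooth: "smooth_real (bump a b s)"
proof -
  have "Dn n (\<lambda>x. Ep 1 (s * x + (- s * a)) * Ep 1 ((- s) * x + s * b))" for n
    by (rule Dn_mult; intro allI Dn_affine Ep_Dn)
  then show ?thesis unfolding smooth_real_Dn bump_def[abs_def] by blast
qed

lemma bump_nonzero: "s > 0 \<Longrightarrow> bump a b s x \<noteq> 0 \<Longrightarrow> a < x \<and> x < b"
  unfolding bump_def Ep_def
  by (auto split: if_splits simp: algebra_simps)

lemma bump_bounds: "0 \<le> bump a b s x \<and> bump a b s x \<le> 1"
  unfolding bump_def Ep_def by (auto intro!: mult_le_one)

lemma bump_lim:
  assumes "a < x" "x < b"
  shows "(\<lambda>j. bump a b (real (Suc j)) x) \<longlonglongrightarrow> 1"
proof -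
  have i: "(\<lambda>j. inverse (real (Suc j))) \<longlonglongrightarrow> 0"
    using LIMSEQ_inverse_real_of_nat by simp
  have 1: "(\<lambda>j. exp (- (inverse (real (Suc j)) / (x - a))) * exp (- (inverse (real (Suc j)) / (b - x)))) \<longlonglongrightarrow>
      exp (- (0 / (x - a))) * exp (- (0 / (b - x)))"
    by (intro tendsto_intros i) (use assms in auto)
  have e: "exp (- (inverse s / (x - a))) * exp (- (inverse s / (b - x))) = bump a b s x" if "s > 0" for s
  proof -
    have "s * x + (- s * a) = s * (x - a)" "(- s) * x + s * b = s * (b - x)" by algebra+
    moreover have "s * (x - a) > 0" "s * (b - x) > 0" using that assms by auto
    ultimately show ?thesis unfolding bump_def Ep_def by (simp add: field_simps)
  qed
  have "eventually (\<lambda>j. exp (- (inverse (real (Suc j)) / (x - a))) * exp (- (inverse (real (Suc j)) / (b - x)))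
        = bump a b (real (Suc j)) x) sequentially"
    by (intro always_eventually allI e) simp
  from Lim_transform_eventually[OF 1 this] show ?thesis by simp
qed

lemma Cc_iff: "g \<in> Cc_infty \<longleftrightarrow> smooth_real g \<and> bounded {x. g x \<noteq> 0}"
  unfolding Cc_infty_def by (simp add: compact_closure)

lemma Cc_zero: "(\<lambda>x. 0) \<in> Cc_infty"
  unfolding Cc_iff smooth_real_Dn by (simp add: Dn_const0)

lemma Cc_add: "f \<in> Cc_infty \<Longrightarrow> g \<in> Cc_infty \<Longrightarrow> (\<lambda>x. f x + g x) \<in> Cc_infty"
proof -
  assume f: "f \<in> Cc_infty" and g: "g \<in> Cc_infty"
  then have s: "\<forall>n. Dn n f" "\<forall>n. Dn n g" and b: "bounded {x. f x \<noteq> 0}" "bounded {x. g x \<noteq> 0}"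
    unfolding Cc_iff smooth_real_Dn by auto
  have "Dn n (\<lambda>x. f x + g x)" for n using s by (intro Dn_add) auto
  moreover have "bounded {x. f x + g x \<noteq> 0}"
  proof (rule bounded_subset)
    show "bounded ({x. f x \<noteq> 0} \<union> {x. g x \<noteq> 0})" using b by (rule bounded_Un[THEN iffD2, OF conjI])
    show "{x. f x + g x \<noteq> 0} \<subseteq> {x. f x \<noteq> 0} \<union> {x. g x \<noteq> 0}" by auto
  qed
  ultimately show ?thesis unfolding Cc_iff smooth_real_Dn by blast
qed

lemma Cc_scale: "f \<in> Cc_infty \<Longrightarrow> (\<lambda>x. c * f x) \<in> Cc_infty"
proof -
  assume f: "f \<in> Cc_infty"
  then have s: "\<forall>n. Dn n f" and b: "bounded {x. f x \<noteq> 0}"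
    unfolding Cc_iff smooth_real_Dn by auto
  have "Dn n (\<lambda>x. c * f x)" for n using s by (intro Dn_scale) auto
  moreover have "bounded {x. c * f x \<noteq> 0}"
  proof (rule bounded_subset)
    show "bounded {x. f x \<noteq> 0}" by (rule b)
    show "{x. c * f x \<noteq> 0} \<subseteq> {x. f x \<noteq> 0}" by auto
  qed
  ultimately show ?thesis unfolding Cc_iff smooth_real_Dn by blast
qed

lemma bump_Cc: "s > 0 \<Longrightarrow> bump a b s \<in> Cc_infty"
proof -
  assume "s > 0"
  have "{x. bump a b s x \<noteq> 0} \<subseteq> {a..b}"
  proof
    fix x assume "x \<in> {x. bump a b s x \<noteq> 0}"
    then have "a < x \<and> x < b" using bump_nonzero[OF \<open>s > 0\<close>] by blast
    then show "x \<in> {a..b}" by simp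
  qed
  then have "bounded {x. bump a b s x \<noteq> 0}" by (rule bounded_subset[OF compact_imp_bounded[OF compact_Icc]])
  then show ?thesis unfolding Cc_iff using bump_smooth by blast
qed

lemma smooth_continuous: "smooth_real g \<Longrightarrow> continuous_on UNIV g"
proof -
  assume "smooth_real g"
  then have "\<forall>x. (deriv ^^ 0) g differentiable (at x)" unfolding smooth_real_def by (rule spec)
  then have "\<And>x. g differentiable (at x)" by simp
  then have "g differentiable_on UNIV" by (rule differentiable_at_imp_differentiable_on)
  then show ?thesis by (rule differentiable_imp_continuous_on)
qed

lemma Cc_continuous: "g \<in> Cc_infty \<Longrightarrow> continuous_on UNIV g"
  unfolding Cc_iff by (erule conjE) (erule smooth_continuous)

lemma Cc_meas: "g \<in> Cc_infty \<Longrightarrow> g \<in> borel_measurable borel"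
  by (rule borel_measurable_continuous_onI, erule Cc_continuous)

definition L2d :: "(real \<Rightarrow> real) \<Rightarrow> (real \<Rightarrow> real) \<Rightarrow> ennreal" where
  "L2d f g = (\<integral>\<^sup>+x. ennreal ((f x - g x)^2) \<partial>lborel)"

definition app :: "(real \<Rightarrow> real) \<Rightarrow> bool" where
  "app f \<longleftrightarrow> f \<in> borel_measurable borel \<and> (\<forall>e>0. \<exists>g\<in>Cc_infty. L2d f g < ennreal e)"

lemma nn_sq_add:
  fixes u v :: "real \<Rightarrow> real"
  assumes [measurable]: "u \<in> borel_measurable borel" "v \<in> borel_measurable borel"
  shows "(\<integral>\<^sup>+x. ennreal ((u x + v x)^2) \<partial>lborel) \<le>
     2 * (\<integral>\<^sup>+x. ennreal ((u x)^2) \<partial>lborel) + 2 * (\<integral>\<^sup>+x. ennreal ((v x)^2) \<partial>lborel)"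
proof -
  have "(\<integral>\<^sup>+x. ennreal ((u x + v x)^2) \<partial>lborel) \<le>
        (\<integral>\<^sup>+x. (2 * ennreal ((u x)^2) + 2 * ennreal ((v x)^2)) \<partial>lborel)"
  proof (rule nn_integral_mono)
    fix x
    have "0 \<le> (u x - v x)^2" by simp
    then have "(u x + v x)^2 \<le> 2 * (u x)^2 + 2 * (v x)^2"
      unfolding power2_sum power2_diff by linarith
    then have "ennreal ((u x + v x)^2) \<le> ennreal (2 * (u x)^2 + 2 * (v x)^2)"
      by (rule ennreal_leI)
    also have "\<dots> = 2 * ennreal ((u x)^2) + 2 * ennreal ((v x)^2)"
      by (simp add: ennreal_plus ennreal_mult)
    finally show "ennreal ((u x + v x)^2) \<le> 2 * ennreal ((u x)^2) + 2 * ennreal ((v x)^2)" .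
  qed
  also have "\<dots> = 2 * (\<integral>\<^sup>+x. ennreal ((u x)^2) \<partial>lborel) + 2 * (\<integral>\<^sup>+x. ennreal ((v x)^2) \<partial>lborel)"
    by (simp add: nn_integral_add nn_integral_cmult)
  finally show ?thesis .
qed

lemma L2d_tri:
  assumes [measurable]: "f \<in> borel_measurable borel" "g \<in> borel_measurable borel" "h \<in> borel_measurable borel"
  shows "L2d f h \<le> 2 * L2d f g + 2 * L2d g h"
  using nn_sq_add[of "\<lambda>x. f x - g x" "\<lambda>x. g x - h x"] unfolding L2d_def by simp

lemma L2d_add:
  assumes [measurable]: "f1 \<in> borel_measurable borel" "g1 \<in> borel_measurable borel"
    "f2 \<in> borel_measurable borel" "g2 \<in> borel_measurable borel"
  shows "L2d (\<lambda>x. f1 x + f2 x) (\<lambda>x. g1 x + g2 x) \<le> 2 * L2d f1 g1 + 2 * L2d f2 g2"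
  using nn_sq_add[of "\<lambda>x. f1 x - g1 x" "\<lambda>x. f2 x - g2 x"] unfolding L2d_def
  by (simp add: algebra_simps)

lemma L2d_scale:
  assumes [measurable]: "f \<in> borel_measurable borel" "g \<in> borel_measurable borel"
  shows "L2d (\<lambda>x. c * f x) (\<lambda>x. c * g x) = ennreal (c^2) * L2d f g"
proof -
  have "L2d (\<lambda>x. c * f x) (\<lambda>x. c * g x) = (\<integral>\<^sup>+x. ennreal (c^2) * ennreal ((f x - g x)^2) \<partial>lborel)"
  proof -
    have "\<And>x. (c * f x - c * g x)^2 = c^2 * (f x - g x)^2" by (simp add: power2_eq_square algebra_simps)
    then show ?thesis unfolding L2d_def by (intro nn_integral_cong) (simp add: ennreal_mult[symmetric])
  qed
  also have "\<dots> = ennreal (c^2) * L2d f g"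
    unfolding L2d_def by (simp add: nn_integral_cmult)
  finally show ?thesis .
qed

lemma ennreal_lt_obtain:
  assumes "x < ennreal d"
  obtains r where "0 \<le> r" "r < d" "x = ennreal r"
proof -
  have "x < top" using less_trans[OF assms ennreal_less_top] .
  then obtain r where r: "x = ennreal r" "0 \<le> r" by (cases x rule: ennreal_cases) auto
  then have "r < d" using assms by (auto simp: ennreal_less_iff)
  then show ?thesis using that r by auto
qed

lemma ennreal_small2:
  fixes a b :: ennreal
  assumes "a < ennreal (e/4)" "b < ennreal (e/4)" "e > 0"
  shows "2 * a + 2 * b < ennreal e"
proof -
  obtain a' where a: "a = ennreal a'" "0 \<le> a'" "a' < e/4"
    by (rule ennreal_lt_obtain[OF assms(1)]) auto
  obtain b' where b: "b = ennreal b'" "0 \<le> b'" "b' < e/4"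
    by (rule ennreal_lt_obtain[OF assms(2)]) auto
  then have "2 * a' + 2 * b' < e" using a by simp
  have "ennreal (2*a'+2*b') = ennreal (2*a') + ennreal (2*b')" by (rule ennreal_plus) (use a b in auto)
  moreover have "ennreal (2*a') = 2 * ennreal a'" "ennreal (2*b') = 2 * ennreal b'"
    using a b by (simp_all add: ennreal_mult' ennreal_numeral)
  moreover have "ennreal (2*a'+2*b') < ennreal e" using \<open>2 * a' + 2 * b' < e\<close> assms(3) by (intro ennreal_lessI) auto
  ultimately show ?thesis using a b by simp
qed

lemma app_meas: "app f \<Longrightarrow> f \<in> borel_measurable borel"
  unfolding app_def by auto

lemma app_lim:
  assumes [measurable]: "f \<in> borel_measurable borel"
  and lim: "\<And>e. e > 0 \<Longrightarrow> \<exists>f'. app f' \<and> L2d f f' < ennreal e"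
  shows "app f"
proof -
  { fix e :: real assume "e > 0"
    then obtain f' where f': "app f'" "L2d f f' < ennreal (e/4)" using lim[of "e/4"] by auto
    have e4: "e/4 > 0" using \<open>e > 0\<close> by simp
    then obtain g where g: "g \<in> Cc_infty" "L2d f' g < ennreal (e/4)" using f'(1) unfolding app_def by blast
    have "L2d f g \<le> 2 * L2d f f' + 2 * L2d f' g"
      by (rule L2d_tri) (use f' g app_def Cc_meas in auto)
    also have "\<dots> < ennreal e" by (rule ennreal_small2) (use f' g \<open>e > 0\<close> in auto)
    finally have "\<exists>g\<in>Cc_infty. L2d f g < ennreal e" using g by auto }
  then show ?thesis unfolding app_def using assms(1) by auto
qed

lemma app_Cc: "g \<in> Cc_infty \<Longrightarrow> app g"
  unfolding app_def L2d_def using Cc_meas by (auto intro!: bexI[of _ g])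

lemma app_zero: "app (\<lambda>x. 0)"
  using app_Cc Cc_zero by auto

lemma app_add:
  assumes "app f1" "app f2"
  shows "app (\<lambda>x. f1 x + f2 x)"
proof -
  have [measurable]: "f1 \<in> borel_measurable borel" "f2 \<in> borel_measurable borel"
    using assms app_def by auto
  { fix e :: real assume "e > 0"
    then have e4: "e/4 > 0" by simp
    obtain g1 where g1: "g1 \<in> Cc_infty" "L2d f1 g1 < ennreal (e/4)"
      using assms(1) e4 unfolding app_def by blast
    obtain g2 where g2: "g2 \<in> Cc_infty" "L2d f2 g2 < ennreal (e/4)"
      using assms(2) e4 unfolding app_def by blast
    note g = g1 g2
    have "L2d (\<lambda>x. f1 x + f2 x) (\<lambda>x. g1 x + g2 x) \<le> 2 * L2d f1 g1 + 2 * L2d f2 g2"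
      by (rule L2d_add) (use g Cc_meas in auto)
    also have "\<dots> < ennreal e" by (rule ennreal_small2) (use g \<open>e > 0\<close> in auto)
    finally have "\<exists>g\<in>Cc_infty. L2d (\<lambda>x. f1 x + f2 x) g < ennreal e" using g Cc_add by blast }
  then show ?thesis unfolding app_def by auto
qed

lemma app_scale:
  assumes "app f"
  shows "app (\<lambda>x. c * f x)"
proof -
  have [measurable]: "f \<in> borel_measurable borel"
    using assms app_def by auto
  { fix e :: real assume "e > 0"
    have cpos: "c^2 + 1 > 0" by (smt (verit) zero_le_power2)
    then have "e / (c^2 + 1) > 0" using \<open>e > 0\<close> by (rule divide_pos_pos[rotated])
    then obtain g where g: "g \<in> Cc_infty" "L2d f g < ennreal (e / (c^2 + 1))"
      using assms unfolding app_def by blast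
    obtain r where r: "0 \<le> r" "r < e / (c^2 + 1)" "L2d f g = ennreal r"
      by (rule ennreal_lt_obtain[OF g(2)])
    have "L2d (\<lambda>x. c * f x) (\<lambda>x. c * g x) = ennreal (c^2) * L2d f g"
      by (rule L2d_scale) (use g Cc_meas in auto)
    also have "\<dots> = ennreal (c^2 * r)" using r by (simp add: ennreal_mult)
    also have "\<dots> < ennreal e"
    proof (rule ennreal_lessI)
      show "0 < e" by fact
      have "c^2 * r \<le> (c^2 + 1) * r" using r by (simp add: mult_right_mono)
      also have "\<dots> < (c^2 + 1) * (e / (c^2 + 1))" using r cpos by (intro mult_strict_left_mono) auto
      also have "\<dots> = e" using cpos by simp
      finally show "c^2 * r < e" .
    qed
    finally have "\<exists>g\<in>Cc_infty. L2d (\<lambda>x. c * f x) g < ennreal e" using g Cc_scale by blast }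
  then show ?thesis unfolding app_def by auto
qed

lemma app_diff: "app f \<Longrightarrow> app g \<Longrightarrow> app (\<lambda>x. f x - g x)"
  using app_add[of f "\<lambda>x. (-1) * g x"] app_scale[of g "-1"] by simp

lemma app_sum: "finite I \<Longrightarrow> (\<And>i. i \<in> I \<Longrightarrow> app (f i)) \<Longrightarrow> app (\<lambda>x. \<Sum>i\<in>I. f i x)"
proof (induction I rule: finite_induct)
  case empty then show ?case using app_zero by simp
next
  case (insert i I)
  then show ?case using app_add[of "f i" "\<lambda>x. \<Sum>i\<in>I. f i x"] by simp
qed

lemma app_ioo: "app (indicator {a<..<b} :: real \<Rightarrow> real)"
proof (cases "a < b")
  case False
  then have "{a<..<b} = ({} :: real set)" by auto
  moreover have "indicator {} = (\<lambda>x::real. 0::real)" by (rule ext) simp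
  ultimately show ?thesis using app_zero by simp
next
  case True
  have bm[measurable]: "\<And>j. bump a b (real (Suc j)) \<in> borel_measurable borel"
    using bump_Cc Cc_meas by simp
  define u where "u j x = ennreal ((indicator {a<..<b} x - bump a b (real (Suc j)) x)^2)" for j x
  have um[measurable]: "\<And>j. u j \<in> borel_measurable borel" unfolding u_def by measurable
  have lim: "(\<lambda>j. \<integral>\<^sup>+x. u j x \<partial>lborel) \<longlonglongrightarrow> (\<integral>\<^sup>+(x::real). 0 \<partial>lborel)"
  proof (rule nn_integral_dominated_convergence[where w="\<lambda>x::real. indicator {a<..<b} x :: ennreal"])
    show "\<And>j. u j \<in> borel_measurable lborel" by simp
    show "(\<lambda>x. 0) \<in> borel_measurable lborel" by simp
    show "(\<lambda>x. indicator {a<..<b} x :: ennreal) \<in> borel_measurable lborel" by simp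
    show "AE x in lborel. u j x \<le> indicator {a<..<b} x" for j
    proof (rule AE_I2)
      fix x
      show "u j x \<le> indicator {a<..<b} x"
      proof (cases "x \<in> {a<..<b}")
        case True
        have "(1 - bump a b (real (Suc j)) x)^2 \<le> 1"
          using bump_bounds[of a b "real (Suc j)" x] by (simp add: power_le_one abs_square_le_1)
        then show ?thesis using True unfolding u_def by simp
      next
        case False
        then have "bump a b (real (Suc j)) x = 0" using bump_nonzero[of "real (Suc j)" a b x] by auto
        then show ?thesis using False unfolding u_def by simp
      qed
    qed
    show "integral\<^sup>N lborel (\<lambda>x. indicator {a<..<b} x) < \<infinity>"
      using True by simp
    show "AE x in lborel. (\<lambda>j. u j x) \<longlonglongrightarrow> 0"
    proof (rule AE_I2)
      fix x
      show "(\<lambda>j. u j x) \<longlonglongrightarrow> 0"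
      proof (cases "x \<in> {a<..<b}")
        case True
        have "(\<lambda>j. (1 - bump a b (real (Suc j)) x)^2) \<longlonglongrightarrow> (1 - 1)^2"
          by (intro tendsto_intros bump_lim) (use True in auto)
        then have "(\<lambda>j. ennreal ((1 - bump a b (real (Suc j)) x)^2)) \<longlonglongrightarrow> ennreal 0"
          by (intro tendsto_ennrealI) simp
        then show ?thesis using True unfolding u_def by simp
      next
        case False
        have "\<And>j. bump a b (real (Suc j)) x = 0"
        proof (rule ccontr)
          fix j assume "bump a b (real (Suc j)) x \<noteq> 0"
          then have "a < x \<and> x < b" by (intro bump_nonzero) auto
          then show False using False by auto
        qed
        then show ?thesis using False unfolding u_def by simp
      qed
    qed
  qed
  show ?thesis unfolding app_def
  proof (intro conjI allI impI)
    show "indicator {a<..<b} \<in> borel_measurable borel" by simp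
    fix e :: real assume "e > 0"
    have "eventually (\<lambda>j. (\<integral>\<^sup>+x. u j x \<partial>lborel) < ennreal e) sequentially"
      using order_tendstoD(2)[OF lim, of "ennreal e"] \<open>e > 0\<close> by simp
    then obtain j where "(\<integral>\<^sup>+x. u j x \<partial>lborel) < ennreal e"
      by (meson eventually_sequentially order.refl)
    then show "\<exists>g\<in>Cc_infty. L2d (indicator {a<..<b}) g < ennreal e"
      using bump_Cc[of "real (Suc j)" a b] unfolding L2d_def u_def by auto
  qed
qed

lemma sets_borel_lessThan: "sets (borel :: real measure) = sigma_sets UNIV (range lessThan)"
proof -
  have "borel = sigma UNIV (range (lessThan :: real \<Rightarrow> real set))"
    using borel_eq_lessThan[where 'a=real] by (simp only: eucl_lessThan)
  then have "sets borel = sets (sigma UNIV (range (lessThan :: real \<Rightarrow> real set)))" by simp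
  also have "\<dots> = sigma_sets UNIV (range lessThan)" by (rule sets_measure_of) simp
  finally show ?thesis .
qed

lemma L2d_ind:
  assumes [measurable]: "A \<in> sets borel" "B \<in> sets borel" and "B \<subseteq> A"
  shows "L2d (indicator A) (indicator B) = emeasure lborel (A - B)"
proof -
  have "\<And>x. ennreal ((indicator A x - indicator B x)^2) = indicator (A - B) x"
    using assms(3) by (auto simp: indicator_def)
  then have "L2d (indicator A) (indicator B) = (\<integral>\<^sup>+x. indicator (A - B) x \<partial>lborel)"
    unfolding L2d_def by simp
  also have "\<dots> = emeasure lborel (A - B)"
    by (rule nn_integral_indicator) simp
  finally show ?thesis .
qed

lemma app_box:
  fixes n :: real
  assumes "A \<in> sets borel"
  shows "app (indicator (A \<inter> {-n<..<n}) :: real \<Rightarrow> real)"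
proof -
  have "Int_stable (range (lessThan :: real \<Rightarrow> real set))"
    unfolding Int_stable_def
  proof (clarsimp)
    fix a b :: real
    show "{..<a} \<inter> {..<b} \<in> range lessThan" by (rule image_eqI[of _ _ "min a b"]) auto
  qed
  moreover have "range (lessThan :: real \<Rightarrow> real set) \<subseteq> Pow UNIV" by auto
  moreover have "A \<in> sigma_sets UNIV (range lessThan)" using assms sets_borel_lessThan by simp
  ultimately show ?thesis
  proof (induction rule: sigma_sets_induct_disjoint)
    case (basic A)
    then obtain c where "A = {..<c}" by auto
    then have "A \<inter> {-n<..<n} = {-n<..<min c n}" by auto
    then show ?case using app_ioo by simp
  next
    case empty
    have "indicator {} = (\<lambda>x::real. 0::real)" by (rule ext) simp
    then show ?case using app_zero by simp
  next
    case (compl A)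
    have "indicator ((UNIV - A) \<inter> {-n<..<n}) = (\<lambda>x. indicator {-n<..<n} x - indicator (A \<inter> {-n<..<n}) x :: real)"
      by (rule ext) (auto simp: indicator_def)
    then show ?case using app_diff[OF app_ioo compl.IH] by simp
  next
    case (union F)
    have Fm[measurable]: "\<And>i. F i \<in> sets borel" using union.hyps(2) sets_borel_lessThan by auto
    let ?I = "{-n<..<n}"
    define U where "U = (\<Union>i. F i) \<inter> ?I"
    define S where "S k = (\<Union>i<k. F i) \<inter> ?I" for k
    have Um[measurable]: "U \<in> sets borel" unfolding U_def by measurable
    have Sm[measurable]: "\<And>k. S k \<in> sets borel" unfolding S_def by measurable
    have SU: "S k \<subseteq> U" for k unfolding S_def U_def by auto
    have appS: "app (indicator (S k))" for k
    proof -
      have "indicator (S k) = (\<lambda>x. \<Sum>i<k. indicator (F i \<inter> ?I) x :: real)"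
      proof
        fix x
        have eqS: "S k = \<Union>((\<lambda>i. F i \<inter> ?I) ` {..<k})" unfolding S_def by auto
        have "disjoint_family_on (\<lambda>i. F i \<inter> ?I) {..<k}"
          using union.hyps(1) unfolding disjoint_family_on_def by auto
        then have "indicator (\<Union>((\<lambda>i. F i \<inter> ?I) ` {..<k})) x = (\<Sum>i\<in>{..<k}. indicator (F i \<inter> ?I) x :: real)"
          by (intro indicator_UN_disjoint) auto
        then show "indicator (S k) x = (\<Sum>i<k. indicator (F i \<inter> ?I) x :: real)"
          unfolding eqS .
      qed
      then show ?thesis using app_sum[of "{..<k}" "\<lambda>i. indicator (F i \<inter> ?I)"] union.IH by simp
    qed
    have lim: "(\<lambda>k. emeasure lborel (U - S k)) \<longlonglongrightarrow> emeasure lborel (\<Inter>k. U - S k)"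
    proof (rule Lim_emeasure_decseq)
      show "range (\<lambda>k. U - S k) \<subseteq> sets lborel" by auto
      show "antimono_on UNIV (\<lambda>k. U - S k)"
        by (intro antimonoI) (auto simp: S_def, metis lessThan_iff order_less_le_trans)
      show "emeasure lborel (U - S k) \<noteq> \<infinity>" for k
      proof -
        have "emeasure lborel (U - S k) \<le> emeasure lborel ?I"
          by (rule emeasure_mono) (auto simp: U_def)
        also have "\<dots> \<le> emeasure lborel {-\<bar>n\<bar>..\<bar>n\<bar>}" by (rule emeasure_mono) auto
        also have "\<dots> < \<infinity>" by simp
        finally show ?thesis by simp
      qed
    qed
    have "(\<Inter>k. U - S k) = {}"
    proof -
      { fix x assume x: "x \<in> U"
        then obtain i where "x \<in> F i" unfolding U_def by auto
        then have "x \<notin> (\<Inter>k. U - S k)" using x unfolding S_def U_def by auto }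
      then show ?thesis by auto
    qed
    then have lim': "(\<lambda>k. emeasure lborel (U - S k)) \<longlonglongrightarrow> 0"
      using lim by (metis emeasure_empty)
    have "L2d (indicator U) (indicator (S k)) = emeasure lborel (U - S k)" for k
      by (rule L2d_ind) (auto simp: SU)
    then have lim0: "(\<lambda>k. L2d (indicator U) (indicator (S k))) \<longlonglongrightarrow> 0"
      using lim' by simp
    show ?case
    proof (rule app_lim)
      show "indicator (\<Union>(range F) \<inter> ?I) \<in> borel_measurable borel" by measurable
      fix e :: real assume "e > 0"
      have "eventually (\<lambda>k. L2d (indicator U) (indicator (S k)) < ennreal e) sequentially"
        using order_tendstoD(2)[OF lim0, of "ennreal e"] \<open>e > 0\<close> by simp
      then obtain k where "L2d (indicator U) (indicator (S k)) < ennreal e"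
        by (meson eventually_sequentially order.refl)
      then show "\<exists>f'. app f' \<and> L2d (indicator (\<Union>(range F) \<inter> ?I)) f' < ennreal e"
        using appS[of k] unfolding U_def by blast
    qed
  qed
qed

lemma app_fin:
  assumes [measurable]: "A \<in> sets borel" and fin: "emeasure lborel A < \<infinity>"
  shows "app (indicator A :: real \<Rightarrow> real)"
proof (rule app_lim)
  show "indicator A \<in> borel_measurable borel" by simp
  define T where "T k = A - {- real k<..<real k}" for k
  have lim: "(\<lambda>k. emeasure lborel (T k)) \<longlonglongrightarrow> emeasure lborel (\<Inter>k. T k)"
  proof (rule Lim_emeasure_decseq)
    show "range T \<subseteq> sets lborel" unfolding T_def by auto
    show "antimono_on UNIV T"
      by (intro antimonoI) (auto simp: T_def)
    show "emeasure lborel (T k) \<noteq> \<infinity>" for k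
    proof -
      have "emeasure lborel (T k) \<le> emeasure lborel A"
        by (rule emeasure_mono) (auto simp: T_def)
      then show ?thesis using fin by (simp add: top.not_eq_extremum order.strict_trans1)
    qed
  qed
  have "(\<Inter>k. T k) = {}"
  proof -
    { fix x :: real
      obtain k :: nat where "\<bar>x\<bar> < real k" using reals_Archimedean2 by blast
      then have "- real k < x \<and> x < real k" by auto
      then have "x \<notin> T k" unfolding T_def by auto
      then have "x \<notin> (\<Inter>k. T k)" by auto }
    then show ?thesis by auto
  qed
  then have lim': "(\<lambda>k. emeasure lborel (T k)) \<longlonglongrightarrow> 0"
    using lim by (metis emeasure_empty)
  have "L2d (indicator A) (indicator (A \<inter> {- real k<..<real k})) = emeasure lborel (T k)" for k
    unfolding T_def by (subst L2d_ind) (auto intro: arg_cong[where f="emeasure lborel"])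
  then have lim0: "(\<lambda>k. L2d (indicator A) (indicator (A \<inter> {- real k<..<real k}))) \<longlonglongrightarrow> 0"
    using lim' by simp
  show "\<exists>f'. app f' \<and> L2d (indicator A) f' < ennreal e" if "e > 0" for e :: real
  proof -
    have "eventually (\<lambda>k. L2d (indicator A) (indicator (A \<inter> {- real k<..<real k})) < ennreal e) sequentially"
      using order_tendstoD(2)[OF lim0, of "ennreal e"] \<open>e > 0\<close> by simp
    then obtain k where "L2d (indicator A) (indicator (A \<inter> {- real k<..<real k})) < ennreal e"
      by (meson eventually_sequentially order.refl)
    then show ?thesis using app_box[OF assms(1), of "real k"] by blast
  qed
qed

lemma app_simple:
  assumes s: "simple_function lborel s" and fin: "\<And>v. v \<noteq> 0 \<Longrightarrow> emeasure lborel (s -` {v}) < \<infinity>"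
  shows "app s"
proof -
  have R: "finite (range s)" using simple_functionD(1)[OF s] by simp
  have meas: "s -` {v} \<in> sets borel" for v using simple_functionD(2)[OF s, of "{v}"] by simp
  have eq: "(\<lambda>x. \<Sum>v\<in>range s. v * indicator (s -` {v}) x) = s"
  proof
    fix x
    have "(\<Sum>v\<in>range s. v * indicator (s -` {v}) x) = (\<Sum>v\<in>range s. if v = s x then v else 0)"
      by (intro sum.cong) (auto simp: indicator_def)
    also have "\<dots> = s x" using R by (simp add: sum.delta)
    finally show "(\<Sum>v\<in>range s. v * indicator (s -` {v}) x) = s x" .
  qed
  have "app (\<lambda>x. \<Sum>v\<in>range s. v * indicator (s -` {v}) x)"
  proof (rule app_sum[OF R])
    fix v assume "v \<in> range s"
    show "app (\<lambda>x. v * indicator (s -` {v}) x)"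
    proof (cases "v = 0")
      case True then show ?thesis using app_zero by simp
    next
      case False then show ?thesis using app_scale[OF app_fin[OF meas fin[OF False]]] by simp
    qed
  qed
  then show ?thesis unfolding eq .
qed

lemma app_L2:
  assumes hm[measurable]: "h \<in> borel_measurable borel" and hi: "integrable lborel (\<lambda>x. (h x)^2)"
  shows "app h"
proof -
  have hm': "h \<in> borel_measurable lborel" by simp
  obtain s where s: "\<And>i. simple_function lborel (s i)" "\<And>x. (\<lambda>i. s i x) \<longlonglongrightarrow> h x"
      "\<And>i x. \<bar>s i x\<bar> \<le> 2 * \<bar>h x\<bar>"
    using borel_measurable_implies_sequence_metric[OF hm', of 0] by (auto simp: dist_real_def)
  have H: "(\<integral>\<^sup>+x. ennreal ((h x)^2) \<partial>lborel) < \<infinity>"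
    using hi unfolding integrable_iff_bounded by simp
  have sm[measurable]: "s i \<in> borel_measurable borel" for i
    using borel_measurable_simple_function[OF s(1)] by simp
  have appS: "app (s i)" for i
  proof (rule app_simple[OF s(1)])
    fix v :: real assume "v \<noteq> 0"
    have "emeasure lborel (s i -` {v}) = (\<integral>\<^sup>+x. indicator (s i -` {v}) x \<partial>lborel)"
      by (rule nn_integral_indicator[symmetric]) (use simple_functionD(2)[OF s(1)[of i], of "{v}"] in simp)
    also have "\<dots> \<le> (\<integral>\<^sup>+x. ennreal (4/v^2) * ennreal ((h x)^2) \<partial>lborel)"
    proof (rule nn_integral_mono)
      fix x
      show "indicator (s i -` {v}) x \<le> ennreal (4/v^2) * ennreal ((h x)^2)"
      proof (cases "s i x = v")
        case True
        then have "\<bar>v\<bar> \<le> 2 * \<bar>h x\<bar>" using s(3) by metis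
        then have "\<bar>v\<bar>^2 \<le> (2 * \<bar>h x\<bar>)^2" by (rule power_mono) simp
        then have "v^2 \<le> 4 * (h x)^2" by (simp add: power_mult_distrib)
        then have "1 \<le> 4/v^2 * (h x)^2" using \<open>v \<noteq> 0\<close> by (simp add: field_simps)
        then have "ennreal 1 \<le> ennreal (4/v^2 * (h x)^2)" by (rule ennreal_leI)
        also have "\<dots> = ennreal (4/v^2) * ennreal ((h x)^2)" by (rule ennreal_mult) auto
        finally show ?thesis using True by simp
      next
        case False
        then show ?thesis by simp
      qed
    qed
    also have "\<dots> = ennreal (4/v^2) * (\<integral>\<^sup>+x. ennreal ((h x)^2) \<partial>lborel)"
      by (rule nn_integral_cmult) simp
    also have "\<dots> < \<infinity>" using H by (simp add: ennreal_mult_less_top)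
    finally show "emeasure lborel (s i -` {v}) < \<infinity>" .
  qed
  have lim: "(\<lambda>i. L2d h (s i)) \<longlonglongrightarrow> (\<integral>\<^sup>+(x::real). 0 \<partial>lborel)"
    unfolding L2d_def
  proof (rule nn_integral_dominated_convergence[where w="\<lambda>x. ennreal (9 * (h x)^2)"])
    show "\<And>i. (\<lambda>x. ennreal ((h x - s i x)\<^sup>2)) \<in> borel_measurable lborel" by simp
    show "(\<lambda>x. 0) \<in> borel_measurable lborel" by simp
    show "(\<lambda>x. ennreal (9 * (h x)^2)) \<in> borel_measurable lborel" by simp
    show "AE x in lborel. ennreal ((h x - s j x)\<^sup>2) \<le> ennreal (9 * (h x)^2)" for j
    proof (rule AE_I2, rule ennreal_leI)
      fix x
      have "\<bar>h x - s j x\<bar> \<le> 3 * \<bar>h x\<bar>" using s(3)[of j x] by linarith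
      then have "\<bar>h x - s j x\<bar>^2 \<le> (3 * \<bar>h x\<bar>)^2" by (rule power_mono) simp
      then show "(h x - s j x)\<^sup>2 \<le> 9 * (h x)^2" by (simp add: power_mult_distrib)
    qed
    have "(\<integral>\<^sup>+x. ennreal (9 * (h x)^2) \<partial>lborel) = (\<integral>\<^sup>+x. 9 * ennreal ((h x)^2) \<partial>lborel)"
      by (intro nn_integral_cong) (simp add: ennreal_mult)
    also have "\<dots> = 9 * (\<integral>\<^sup>+x. ennreal ((h x)^2) \<partial>lborel)"
      by (rule nn_integral_cmult) simp
    also have "\<dots> < \<infinity>" using H by (simp add: ennreal_mult_less_top)
    finally show "(\<integral>\<^sup>+x. ennreal (9 * (h x)^2) \<partial>lborel) < \<infinity>" .
    show "AE x in lborel. (\<lambda>i. ennreal ((h x - s i x)\<^sup>2)) \<longlonglongrightarrow> 0"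
    proof (rule AE_I2)
      fix x
      have "(\<lambda>i. (h x - s i x)\<^sup>2) \<longlonglongrightarrow> (h x - h x)^2"
        by (intro tendsto_intros s(2))
      then have "(\<lambda>i. ennreal ((h x - s i x)\<^sup>2)) \<longlonglongrightarrow> ennreal 0"
        by (intro tendsto_ennrealI) simp
      then show "(\<lambda>i. ennreal ((h x - s i x)\<^sup>2)) \<longlonglongrightarrow> 0" by simp
    qed
  qed
  show ?thesis
  proof (rule app_lim[OF hm])
    fix e :: real assume "e > 0"
    have "eventually (\<lambda>i. L2d h (s i) < ennreal e) sequentially"
      using order_tendstoD(2)[OF lim, of "ennreal e"] \<open>e > 0\<close> by simp
    then obtain i where "L2d h (s i) < ennreal e"
      by (meson eventually_sequentially order.refl)
    then show "\<exists>f'. app f' \<and> L2d h f' < ennreal e" using appS by blast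
  qed
qed

lemma part1:
  "\<forall>h. h \<in> borel_measurable borel \<longrightarrow> integrable lborel (\<lambda>x. (h x)^2) \<longrightarrow>
            (\<forall>\<epsilon>>0. \<exists>c\<in>C_sbm. normsq_sbm \<gamma> (\<lambda>x. h x - c x) < \<epsilon>)"
proof (intro allI impI)
  fix h :: "real \<Rightarrow> real" and \<epsilon> :: real
  assume hm[measurable]: "h \<in> borel_measurable borel" and hi: "integrable lborel (\<lambda>x. (h x)^2)" and "\<epsilon> > 0"
  obtain g where g: "g \<in> Cc_infty" "L2d h g < ennreal \<epsilon>"
    using app_L2[OF hm hi] \<open>\<epsilon> > 0\<close> unfolding app_def by blast
  have gm[measurable]: "g \<in> borel_measurable borel" using Cc_meas[OF g(1)] .
  define c where "c = (\<lambda>x. g x + (if x = 0 then h 0 - g 0 else 0))"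
  have "c \<in> C_sbm" unfolding C_sbm_def c_def using g(1) by blast
  have "normsq_sbm \<gamma> (\<lambda>x. h x - c x) = (\<integral>x. (h x - c x)^2 \<partial>lborel)"
    unfolding normsq_sbm_def c_def by simp
  also have "\<dots> = (\<integral>x. (h x - g x)^2 \<partial>lborel)"
  proof (rule integral_cong_AE)
    show "(\<lambda>x. (h x - c x)\<^sup>2) \<in> borel_measurable lborel" unfolding c_def by measurable
    show "(\<lambda>x. (h x - g x)\<^sup>2) \<in> borel_measurable lborel" by measurable
    show "AE x in lborel. (h x - c x)\<^sup>2 = (h x - g x)\<^sup>2"
      using AE_lborel_singleton[of 0] by eventually_elim (simp add: c_def)
  qed
  also have "\<dots> = enn2real (L2d h g)"
    unfolding L2d_def by (rule integral_eq_nn_integral) auto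
  also have "\<dots> < \<epsilon>"
  proof -
    obtain r where "0 \<le> r" "r < \<epsilon>" "L2d h g = ennreal r" by (rule ennreal_lt_obtain[OF g(2)])
    then show ?thesis by simp
  qed
  finally show "\<exists>c\<in>C_sbm. normsq_sbm \<gamma> (\<lambda>x. h x - c x) < \<epsilon>" using \<open>c \<in> C_sbm\<close> by blast
qed

lemma riemann_sum:
  fixes \<phi> :: "real \<Rightarrow> real" and N R :: real
  assumes \<phi>c: "continuous_on UNIV \<phi>" and supp: "\<And>y. \<bar>y\<bar> > R \<Longrightarrow> \<phi> y = 0" and N: "N > 0" and R: "R \<ge> 0"
  shows "(\<integral>x. \<phi> (real_of_int \<lfloor>N * x\<rfloor> / N) \<partial>lborel) = (\<Sum>k\<in>{-\<lceil>R * N\<rceil>..\<lceil>R * N\<rceil>}. \<phi> (real_of_int k / N) / N)"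
proof -
  define M where "M = \<lceil>R * N\<rceil>"
  have \<phi>m[measurable]: "\<phi> \<in> borel_measurable borel" using \<phi>c borel_measurable_continuous_onI by blast
  have eq: "\<phi> (real_of_int \<lfloor>N * x\<rfloor> / N) = (\<Sum>k\<in>{-M..M}. \<phi> (real_of_int k / N) * indicator {real_of_int k / N..<(real_of_int k + 1) / N} x)" for x
  proof -
    define j where "j = \<lfloor>N * x\<rfloor>"
    have ind: "indicator {real_of_int k / N..<(real_of_int k + 1) / N} x = (if k = j then 1 else 0 :: real)" for k
    proof -
      have "x \<in> {real_of_int k / N..<(real_of_int k + 1) / N} \<longleftrightarrow> real_of_int k \<le> N * x \<and> N * x < real_of_int k + 1"
        using N by (auto simp: field_simps)
      also have "\<dots> \<longleftrightarrow> k = j" unfolding j_def using floor_eq_iff[of "N * x" k] by auto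
      finally show ?thesis by (simp add: indicator_def)
    qed
    have "(\<Sum>k\<in>{-M..M}. \<phi> (real_of_int k / N) * indicator {real_of_int k / N..<(real_of_int k + 1) / N} x)
        = (\<Sum>k\<in>{-M..M}. if k = j then \<phi> (real_of_int k / N) else 0)"
      by (intro sum.cong) (auto simp: ind)
    also have "\<dots> = (if j \<in> {-M..M} then \<phi> (real_of_int j / N) else 0)"
      by (simp add: sum.delta')
    also have "\<dots> = \<phi> (real_of_int j / N)"
    proof (cases "j \<in> {-M..M}")
      case False
      then have "\<bar>j\<bar> > M" by auto
      then have "real_of_int \<bar>j\<bar> > R * N" unfolding M_def by linarith
      then have "\<bar>real_of_int j / N\<bar> > R" using N by (simp add: field_simps)
      then show ?thesis using False supp by simp
    qed simp
    finally show ?thesis unfolding j_def by simp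
  qed
  have le: "real_of_int k / N \<le> (real_of_int k + 1) / N" for k using N by (simp add: divide_right_mono)
  have int: "integrable lborel (\<lambda>x. \<phi> (real_of_int k / N) * indicator {real_of_int k / N..<(real_of_int k + 1) / N} x)" for k
    by (intro integrable_mult_right integrable_real_indicator) (auto simp: le)
  have "(\<integral>x. \<phi> (real_of_int \<lfloor>N * x\<rfloor> / N) \<partial>lborel)
      = (\<integral>x. (\<Sum>k\<in>{-M..M}. \<phi> (real_of_int k / N) * indicator {real_of_int k / N..<(real_of_int k + 1) / N} x) \<partial>lborel)"
    by (simp only: eq)
  also have "\<dots> = (\<Sum>k\<in>{-M..M}. (\<integral>x. \<phi> (real_of_int k / N) * indicator {real_of_int k / N..<(real_of_int k + 1) / N} x \<partial>lborel))"
    using int by (intro Bochner_Integration.integral_sum) auto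
  also have "\<dots> = (\<Sum>k\<in>{-M..M}. \<phi> (real_of_int k / N) / N)"
  proof (intro sum.cong refl)
    fix k assume "k \<in> {-M..M}"
    have "(\<integral>x. \<phi> (real_of_int k / N) * indicator {real_of_int k / N..<(real_of_int k + 1) / N} x \<partial>lborel)
        = \<phi> (real_of_int k / N) * measure lborel {real_of_int k / N..<(real_of_int k + 1) / N}"
      by simp
    also have "\<dots> = \<phi> (real_of_int k / N) * ((real_of_int k + 1) / N - real_of_int k / N)"
      using le by simp
    also have "\<dots> = \<phi> (real_of_int k / N) / N" using N by (simp add: field_simps)
    finally show "(\<integral>x. \<phi> (real_of_int k / N) * indicator {real_of_int k / N..<(real_of_int k + 1) / N} x \<partial>lborel)
        = \<phi> (real_of_int k / N) / N" .
  qed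
  finally show ?thesis unfolding M_def .
qed

lemma floor_div_bounds:
  fixes N x :: real
  assumes "N > 0"
  shows "x - 1 / N \<le> real_of_int \<lfloor>N * x\<rfloor> / N" "real_of_int \<lfloor>N * x\<rfloor> / N \<le> x"
proof -
  have a: "N * x - 1 \<le> real_of_int \<lfloor>N * x\<rfloor>" "real_of_int \<lfloor>N * x\<rfloor> \<le> N * x" by linarith+
  have "x - 1 / N = (N * x - 1) / N" using assms by (simp add: field_simps)
  also have "\<dots> \<le> real_of_int \<lfloor>N * x\<rfloor> / N" using a(1) assms by (intro divide_right_mono) auto
  finally show "x - 1 / N \<le> real_of_int \<lfloor>N * x\<rfloor> / N" .
  have "real_of_int \<lfloor>N * x\<rfloor> / N \<le> (N * x) / N" using a(2) assms by (intro divide_right_mono) auto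
  also have "\<dots> = x" using assms by simp
  finally show "real_of_int \<lfloor>N * x\<rfloor> / N \<le> x" .
qed

lemma part2: "\<forall>f\<in>C_sbm. (\<lambda>N. sqrt (normsq_sip \<gamma> N f)) \<longlonglongrightarrow> sqrt (normsq_sbm \<gamma> f)"
proof
  fix f assume "f \<in> C_sbm"
  then obtain g c where g: "g \<in> Cc_infty" and f: "f = (\<lambda>x. g x + (if x = 0 then c else 0))"
    unfolding C_sbm_def by blast
  have gc: "continuous_on UNIV g" using Cc_continuous[OF g] .
  have gm[measurable]: "g \<in> borel_measurable borel" using Cc_meas[OF g] .
  define \<phi> where "\<phi> = (\<lambda>x. (g x)^2)"
  have \<phi>c: "continuous_on UNIV \<phi>" unfolding \<phi>_def by (intro continuous_intros gc)
  have \<phi>m[measurable]: "\<phi> \<in> borel_measurable borel" unfolding \<phi>_def by measurable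
  have "bounded {x. g x \<noteq> 0}" using g Cc_iff by blast
  then obtain a where a: "\<And>x. g x \<noteq> 0 \<Longrightarrow> \<bar>x\<bar> \<le> a" unfolding bounded_iff by auto
  define R where "R = max a 0"
  have R0: "R \<ge> 0" unfolding R_def by simp
  have gsupp: "g y = 0" if "\<bar>y\<bar> > R" for y
  proof (rule ccontr)
    assume "g y \<noteq> 0"
    then have "\<bar>y\<bar> \<le> a" by (rule a)
    moreover have "a \<le> R" unfolding R_def by (rule max.cobounded1)
    ultimately show False using that by linarith
  qed
  have supp: "\<And>y. \<bar>y\<bar> > R \<Longrightarrow> \<phi> y = 0" using gsupp unfolding \<phi>_def by simp
  have "bounded (\<phi> ` {-R..R})"
    by (intro compact_imp_bounded compact_continuous_image continuous_on_subset[OF \<phi>c]) auto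
  then obtain B0 where B0: "\<And>z. z \<in> \<phi> ` {-R..R} \<Longrightarrow> \<bar>z\<bar> \<le> B0" unfolding bounded_iff by auto
  define B where "B = max B0 0"
  have B: "\<bar>\<phi> y\<bar> \<le> B" for y
  proof (cases "\<bar>y\<bar> > R")
    case True then show ?thesis using supp unfolding B_def by simp
  next
    case False then have "y \<in> {-R..R}" by auto
    then have "\<bar>\<phi> y\<bar> \<le> B0" by (intro B0) (rule imageI)
    moreover have "B0 \<le> B" unfolding B_def by (rule max.cobounded1)
    ultimately show ?thesis by linarith
  qed
  have B00: "B \<ge> 0" unfolding B_def by simp
  define F where "F m x = \<phi> (real_of_int \<lfloor>real (Suc m) * x\<rfloor> / real (Suc m))" for m x
  have Fm[measurable]: "F m \<in> borel_measurable borel" for m unfolding F_def by measurable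
  have inv0: "(\<lambda>m. 1 / real (Suc m)) \<longlonglongrightarrow> 0"
    using LIMSEQ_inverse_real_of_nat by (simp add: inverse_eq_divide)
  have intlim: "(\<lambda>m. \<integral>x. F m x \<partial>lborel) \<longlonglongrightarrow> (\<integral>x. \<phi> x \<partial>lborel)"
  proof (rule integral_dominated_convergence[where w="\<lambda>x. B * indicator {-R-1..R+1} x"])
    show "\<phi> \<in> borel_measurable lborel" by simp
    show "\<And>m. F m \<in> borel_measurable lborel" by simp
    have "-R-1 \<le> R+1" using R0 by simp
    then show "integrable lborel (\<lambda>x. B * indicator {-R-1..R+1} x)"
      by (intro integrable_mult_right integrable_real_indicator) auto
    show "AE x in lborel. (\<lambda>m. F m x) \<longlonglongrightarrow> \<phi> x"
    proof (rule AE_I2)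
      fix x :: real
      have lo: "x - 1 / real (Suc m) \<le> real_of_int \<lfloor>real (Suc m) * x\<rfloor> / real (Suc m)" for m
        by (rule floor_div_bounds) simp
      have hi: "real_of_int \<lfloor>real (Suc m) * x\<rfloor> / real (Suc m) \<le> x" for m
        by (rule floor_div_bounds) simp
      have c1: "(\<lambda>m. x - 1 / real (Suc m)) \<longlonglongrightarrow> x"
        using tendsto_diff[OF tendsto_const inv0, of x] by simp
      have c2: "(\<lambda>m. real_of_int \<lfloor>real (Suc m) * x\<rfloor> / real (Suc m)) \<longlonglongrightarrow> x"
      proof (rule tendsto_sandwich[OF _ _ c1 tendsto_const])
        show "\<forall>\<^sub>F m in sequentially. x - 1 / real (Suc m) \<le> real_of_int \<lfloor>real (Suc m) * x\<rfloor> / real (Suc m)"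
          by (intro always_eventually allI lo)
        show "\<forall>\<^sub>F m in sequentially. real_of_int \<lfloor>real (Suc m) * x\<rfloor> / real (Suc m) \<le> x"
          by (intro always_eventually allI hi)
      qed
      have "isCont \<phi> x" using \<phi>c by (simp add: continuous_on_eq_continuous_at)
      from isCont_tendsto_compose[OF this c2]
      show "(\<lambda>m. F m x) \<longlonglongrightarrow> \<phi> x" unfolding F_def .
    qed
    show "AE x in lborel. norm (F m x) \<le> B * indicator {-R-1..R+1} x" for m
    proof (rule AE_I2)
      fix x :: real
      define y where "y = real_of_int \<lfloor>real (Suc m) * x\<rfloor> / real (Suc m)"
      show "norm (F m x) \<le> B * indicator {-R-1..R+1} x"
      proof (cases "\<bar>y\<bar> > R")
        case True
        then have "F m x = 0" using supp unfolding F_def y_def by simp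
        then show ?thesis using B00 by simp
      next
        case False
        have lo: "x - 1 / real (Suc m) \<le> y"
          unfolding y_def by (rule floor_div_bounds) simp
        have hi: "y \<le> x"
          unfolding y_def by (rule floor_div_bounds) simp
        have "1 / real (Suc m) \<le> 1" by simp
        moreover have "-R \<le> y" "y \<le> R" using False by auto
        ultimately have "x \<in> {-R-1..R+1}" using lo hi unfolding atLeastAtMost_iff by linarith
        then show ?thesis using B[of y] unfolding F_def y_def by simp
      qed
    qed
  qed
  define D where "D = (g 0 + c)^2 - (g 0)^2"
  have sumeq: "normsq_sip \<gamma> (Suc m) f = (\<integral>x. F m x \<partial>lborel) + (1 / real (Suc m)) * D + sqrt 2 * \<gamma> * (f 0)^2" for m
  proof -
    define N where "N = real (Suc m)"
    have N0: "N > 0" unfolding N_def by simp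
    define M where "M = \<lceil>R * N\<rceil>"
    have "0 \<le> R * N" using R0 N0 by simp
    then have M0: "M \<ge> 0" unfolding M_def zero_le_ceiling by linarith
    have "(\<Sum>\<^sub>\<infinity>k::int. (1 / N) * (f (real_of_int k / N))^2) = infsum (\<lambda>k::int. (1 / N) * (f (real_of_int k / N))^2) {-M..M}"
    proof (rule infsum_cong_neutral)
      fix k :: int assume "k \<in> UNIV - {-M..M}"
      then have "\<bar>k\<bar> > M" by auto
      then have k0: "k \<noteq> 0" using M0 by auto
      have "real_of_int \<bar>k\<bar> > R * N" using \<open>\<bar>k\<bar> > M\<close> unfolding M_def by linarith
      then have "\<bar>real_of_int k / N\<bar> > R" using N0 by (simp add: field_simps)
      then show "(1 / N) * (f (real_of_int k / N))^2 = 0" using gsupp k0 N0 unfolding f by simp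
    qed auto
    also have "\<dots> = (\<Sum>k\<in>{-M..M}. (1 / N) * (f (real_of_int k / N))^2)" by (rule infsum_finite) simp
    also have "\<dots> = (\<Sum>k\<in>{-M..M}. \<phi> (real_of_int k / N) / N + (if k = 0 then (1 / N) * D else 0))"
    proof (rule sum.cong[OF refl])
      fix k :: int assume "k \<in> {-M..M}"
      show "(1 / N) * (f (real_of_int k / N))^2 = \<phi> (real_of_int k / N) / N + (if k = 0 then (1 / N) * D else 0)"
      proof (cases "k = 0")
        case True
        then show ?thesis unfolding f \<phi>_def D_def by (simp add: diff_divide_distrib)
      next
        case False
        then have "real_of_int k / N \<noteq> 0" using N0 by simp
        then show ?thesis using False unfolding f \<phi>_def D_def by simp
      qed
    qed
    also have "\<dots> = (\<Sum>k\<in>{-M..M}. \<phi> (real_of_int k / N) / N) + (1 / N) * D"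
      using M0 by (simp add: sum.distrib sum.delta)
    also have "(\<Sum>k\<in>{-M..M}. \<phi> (real_of_int k / N) / N) = (\<integral>x. F m x \<partial>lborel)"
      unfolding F_def M_def N_def by (rule riemann_sum[symmetric]) (use \<phi>c supp R0 in auto)
    finally show ?thesis unfolding normsq_sip_def N_def by simp
  qed
  have sbm: "normsq_sbm \<gamma> f = (\<integral>x. \<phi> x \<partial>lborel) + sqrt 2 * \<gamma> * (f 0)^2"
  proof -
    have "(\<integral>x. (f x)^2 \<partial>lborel) = (\<integral>x. \<phi> x \<partial>lborel)"
    proof (rule integral_cong_AE)
      show "(\<lambda>x. (f x)\<^sup>2) \<in> borel_measurable lborel" unfolding f by measurable
      show "\<phi> \<in> borel_measurable lborel" by simp
      show "AE x in lborel. (f x)\<^sup>2 = \<phi> x"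
        using AE_lborel_singleton[of 0] by eventually_elim (simp add: f \<phi>_def)
    qed
    then show ?thesis unfolding normsq_sbm_def by simp
  qed
  have "(\<lambda>m. (\<integral>x. F m x \<partial>lborel) + (1 / real (Suc m)) * D + sqrt 2 * \<gamma> * (f 0)^2)
      \<longlonglongrightarrow> (\<integral>x. \<phi> x \<partial>lborel) + 0 * D + sqrt 2 * \<gamma> * (f 0)^2"
    by (intro tendsto_intros intlim inv0)
  then have "(\<lambda>m. normsq_sip \<gamma> (Suc m) f) \<longlonglongrightarrow> normsq_sbm \<gamma> f"
    unfolding sumeq sbm by simp
  then have "(\<lambda>m. sqrt (normsq_sip \<gamma> (Suc m) f)) \<longlonglongrightarrow> sqrt (normsq_sbm \<gamma> f)"
    by (rule tendsto_real_sqrt)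
  then show "(\<lambda>N. sqrt (normsq_sip \<gamma> N f)) \<longlonglongrightarrow> sqrt (normsq_sbm \<gamma> f)"
    by (rule filterlim_sequentially_Suc[THEN iffD1])
qed

theorem proposition5p5:
  fixes \<gamma> :: real
  assumes "\<gamma> > 0"
  shows "(\<forall>h. h \<in> borel_measurable borel \<longrightarrow> integrable lborel (\<lambda>x. (h x)^2) \<longrightarrow>
            (\<forall>\<epsilon>>0. \<exists>c\<in>C_sbm. normsq_sbm \<gamma> (\<lambda>x. h x - c x) < \<epsilon>))
       \<and> (\<forall>f\<in>C_sbm. (\<lambda>N. sqrt (normsq_sip \<gamma> N f)) \<longlonglongrightarrow> sqrt (normsq_sbm \<gamma> f))"
  using part1[of \<gamma>] part2[of \<gamma>] by (rule conjI)

end
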